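(* Let $(\mathcal{E},\mathcal{L},\mathcal{B})$ be a weakly left resolving labelled space whose accommodating family $\mathcal{B}$ is closed under relative complements, let $S$ be its associated inverse semigroup, and let $\xi$ be a tight filter in $E(S)$ with word $\alpha$. Then for every $0<n\le|\alpha|$ ($n$ finite), $\xi_n$ is an ultrafilter in $\mathcal{B}_{\alpha_{1,n}}$, and $\xi_0$ is either empty or an ultrafilter in $\mathcal{B}$.
   Context: A directed graph $\mathcal{E}=(\mathcal{E}^0,\mathcal{E}^1,r,s)$ has countable nonempty vertex set, edge set, range/source maps; paths satisfy $r(\lambda_i)=s(\lambda_{i+1})$. A labelled graph has a surjective labelling $\mathcal{L}:\mathcal{E}^1\to\mathcal{A}$ extended letterwise to finite and infinite paths. $\omega$ is the empty word, $\mathcal{L}^+=\bigcup_{n\ge1}\mathcal{L}(\mathcal{E}^n)$, $\mathcal{L}^*=\{\omega\}\cup\mathcal{L}^+$, $\mathcal{L}^\infty$ the labels of infinite paths; $\alpha_{i,j}=\alpha_i\cdots\alpha_j$, $\alpha_{1,0}=\omega$. For $A\subseteq\mathcal{E}^0$, $\alpha\in\mathcal{L}^+$: $r(A,\alpha)=\{r(\lambda):\mathcal{L}(\lambda)=\alpha,\ s(\lambda)\in A\}$, $r(A,\omega)=A$, $r(\alpha)=r(\mathcal{E}^0,\alpha)$. $\mathcal{B}$ accommodating: closed under $r(\cdot,\alpha)$, finite intersections and unions, contains $r(\alpha)$ for $\alpha\in\mathcal{L}^+$; labelled space weakly left resolving if $r(A\cap B,\alpha)=r(A,\alpha)\cap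 r(B,\alpha)$ for $A,B\in\mathcal{B}$, $\alpha\in\mathcal{L}^+$. $\mathcal{B}_\alpha=\mathcal{B}\cap\mathcal{P}(r(\alpha))$, $\mathcal{B}_\omega=\mathcal{B}$. $S$ = triples $(\alpha,A,\beta)$, $\alpha,\beta\in\mathcal{L}^*$, $\emptyset\ne A\in\mathcal{B}_\alpha\cap\mathcal{B}_\beta$, plus $0$; product $(\alpha,A,\beta)(\gamma,B,\delta)=(\alpha\gamma',r(A,\gamma')\cap B,\delta)$ if $\gamma=\beta\gamma'$, $=(\alpha,A\cap r(B,\beta'),\delta\beta')$ if $\beta=\gamma\beta'$, $=0$ otherwise (empty middle entry identified with $0$). $E(S)=\{(\alpha,A,\alpha)\}\cup\{0\}$, $p\le q$ iff $pq=p$. A filter in a poset with least element $0$ is a nonempty upward-closed subset not containing $0$ in which any two elements have a common lower bound in it; an ultrafilter is a maximal filter; filters in $\mathcal{B}_\alpha$ are under inclusion. The word of a filter $\xi$ in $E(S)$ is the longest word among its elements if it exists, and otherwise the unique $\alpha\in\mathcal{L}^\infty$ such that all elements of $\xi$ are of the form $(\alpha_{1,n},A,\alpha_{1,n})$; $\xi_n=\{A\in\mathcal{B}:(\alpha_{1,n},A,\alpha_{1,n})\in\xi\}$. For $x\in E(S)$, a set $Z\subseteq\{y\in E(S):y\le x\}$ is a cover for $x$ if for every nonzero $y\le x$ there is $z\in Z$ with $zy\neq0$. A filter $\xi$ in $E(S)$ is tight if for every $x\in\xi$ and every finite cover $Z$ of $x$ one has $Z\cap\xi\neq\emptyset$.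 *)

theory Defs
  imports "HOL-Library.Countable_Set" "HOL-Library.Extended_Nat"
begin

text \<open>Directed graph: vertex set = UNIV :: 'v set, edge set = UNIV :: 'e set,
  range map rg and source map sc. Labelling lab :: 'e => 'a; the alphabet is
  range lab, so the labelling is surjective by construction.\<close>

definition is_path :: "('e \<Rightarrow> 'v) \<Rightarrow> ('e \<Rightarrow> 'v) \<Rightarrow> 'e list \<Rightarrow> bool" where
  "is_path rg sc es \<longleftrightarrow> es \<noteq> [] \<and> (\<forall>i. Suc i < length es \<longrightarrow> rg (es ! i) = sc (es ! Suc i))"

definition Lplus :: "('e \<Rightarrow> 'v) \<Rightarrow> ('e \<Rightarrow> 'v) \<Rightarrow> ('e \<Rightarrow> 'a) \<Rightarrow> 'a list set" where
  "Lplus rg sc lab = {map lab es | es. is_path rg sc es}"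

definition Lstar :: "('e \<Rightarrow> 'v) \<Rightarrow> ('e \<Rightarrow> 'v) \<Rightarrow> ('e \<Rightarrow> 'a) \<Rightarrow> 'a list set" where
  "Lstar rg sc lab = insert [] (Lplus rg sc lab)"

definition Linf :: "('e \<Rightarrow> 'v) \<Rightarrow> ('e \<Rightarrow> 'v) \<Rightarrow> ('e \<Rightarrow> 'a) \<Rightarrow> (nat \<Rightarrow> 'a) set" where
  "Linf rg sc lab = {lab \<circ> p | p. \<forall>i. rg (p i) = sc (p (Suc i))}"

definition rel_range :: "('e \<Rightarrow> 'v) \<Rightarrow> ('e \<Rightarrow> 'v) \<Rightarrow> ('e \<Rightarrow> 'a) \<Rightarrow> 'v set \<Rightarrow> 'a list \<Rightarrow> 'v set" where
  "rel_range rg sc lab A \<alpha> =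
     (if \<alpha> = [] then A
      else {rg (last es) | es. is_path rg sc es \<and> map lab es = \<alpha> \<and> sc (hd es) \<in> A})"

definition accommodating :: "('e \<Rightarrow> 'v) \<Rightarrow> ('e \<Rightarrow> 'v) \<Rightarrow> ('e \<Rightarrow> 'a) \<Rightarrow> 'v set set \<Rightarrow> bool" where
  "accommodating rg sc lab B \<longleftrightarrow>
     (\<forall>A\<in>B. \<forall>\<alpha>\<in>Lplus rg sc lab. rel_range rg sc lab A \<alpha> \<in> B) \<and>
     (\<forall>A\<in>B. \<forall>C\<in>B. A \<inter> C \<in> B \<and> A \<union> C \<in> B) \<and>
     (\<forall>\<alpha>\<in>Lplus rg sc lab. rel_range rg sc lab UNIV \<alpha> \<in> B)"

definition weakly_left_resolving :: "('e \<Rightarrow> 'v) \<Rightarrow> ('e \<Rightarrow> 'v) \<Rightarrow> ('e \<Rightarrow> 'a) \<Rightarrow> 'v set set \<Rightarrow> bool" where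
  "weakly_left_resolving rg sc lab B \<longleftrightarrow>
     (\<forall>A\<in>B. \<forall>C\<in>B. \<forall>\<alpha>\<in>Lplus rg sc lab.
        rel_range rg sc lab (A \<inter> C) \<alpha> = rel_range rg sc lab A \<alpha> \<inter> rel_range rg sc lab C \<alpha>)"

definition closed_rel_compl :: "'v set set \<Rightarrow> bool" where
  "closed_rel_compl B \<longleftrightarrow> (\<forall>A\<in>B. \<forall>C\<in>B. A - C \<in> B)"

definition Bsub :: "('e \<Rightarrow> 'v) \<Rightarrow> ('e \<Rightarrow> 'v) \<Rightarrow> ('e \<Rightarrow> 'a) \<Rightarrow> 'v set set \<Rightarrow> 'a list \<Rightarrow> 'v set set" where
  "Bsub rg sc lab B \<alpha> = (if \<alpha> = [] then B else {A \<in> B. A \<subseteq> rel_range rg sc lab UNIV \<alpha>})"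

text \<open>Inverse semigroup S: None is 0, Some (alpha, A, beta) the triple.\<close>
type_synonym ('a, 'v) selem = "('a list \<times> 'v set \<times> 'a list) option"

definition S_set :: "('e \<Rightarrow> 'v) \<Rightarrow> ('e \<Rightarrow> 'v) \<Rightarrow> ('e \<Rightarrow> 'a) \<Rightarrow> 'v set set \<Rightarrow> ('a, 'v) selem set" where
  "S_set rg sc lab B = insert None
     {Some (\<alpha>, A, \<beta>) | \<alpha> A \<beta>. \<alpha> \<in> Lstar rg sc lab \<and> \<beta> \<in> Lstar rg sc lab \<and> A \<noteq> {} \<and>
        A \<in> Bsub rg sc lab B \<alpha> \<inter> Bsub rg sc lab B \<beta>}"

definition mk_triple :: "'a list \<Rightarrow> 'v set \<Rightarrow> 'a list \<Rightarrow> ('a, 'v) selem" where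
  "mk_triple \<alpha> A \<beta> = (if A = {} then None else Some (\<alpha>, A, \<beta>))"

fun smult :: "('e \<Rightarrow> 'v) \<Rightarrow> ('e \<Rightarrow> 'v) \<Rightarrow> ('e \<Rightarrow> 'a) \<Rightarrow> ('a, 'v) selem \<Rightarrow> ('a, 'v) selem \<Rightarrow> ('a, 'v) selem" where
  "smult rg sc lab (Some (\<alpha>, A, \<beta>)) (Some (\<gamma>, C, \<delta>)) =
     (if (\<exists>\<gamma>'. \<gamma> = \<beta> @ \<gamma>') then
        (let \<gamma>' = drop (length \<beta>) \<gamma> in mk_triple (\<alpha> @ \<gamma>') (rel_range rg sc lab A \<gamma>' \<inter> C) \<delta>)
      else if (\<exists>\<beta>'. \<beta> = \<gamma> @ \<beta>') then
        (let \<beta>' = drop (length \<gamma>) \<beta> in mk_triple \<alpha> (A \<inter> rel_range rg sc lab C \<beta>') (\<delta> @ \<beta>'))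
      else None)"
| "smult rg sc lab _ _ = None"

definition ES :: "('e \<Rightarrow> 'v) \<Rightarrow> ('e \<Rightarrow> 'v) \<Rightarrow> ('e \<Rightarrow> 'a) \<Rightarrow> 'v set set \<Rightarrow> ('a, 'v) selem set" where
  "ES rg sc lab B = insert None
     {Some (\<alpha>, A, \<alpha>) | \<alpha> A. \<alpha> \<in> Lstar rg sc lab \<and> A \<noteq> {} \<and> A \<in> Bsub rg sc lab B \<alpha>}"

definition sle :: "('e \<Rightarrow> 'v) \<Rightarrow> ('e \<Rightarrow> 'v) \<Rightarrow> ('e \<Rightarrow> 'a) \<Rightarrow> ('a, 'v) selem \<Rightarrow> ('a, 'v) selem \<Rightarrow> bool" where
  "sle rg sc lab p q \<longleftrightarrow> smult rg sc lab p q = p"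

definition is_filter :: "'b set \<Rightarrow> ('b \<Rightarrow> 'b \<Rightarrow> bool) \<Rightarrow> 'b \<Rightarrow> 'b set \<Rightarrow> bool" where
  "is_filter P le z0 F \<longleftrightarrow> F \<subseteq> P \<and> F \<noteq> {} \<and> z0 \<notin> F \<and>
     (\<forall>x\<in>F. \<forall>y\<in>P. le x y \<longrightarrow> y \<in> F) \<and>
     (\<forall>x\<in>F. \<forall>y\<in>F. \<exists>z\<in>F. le z x \<and> le z y)"

definition is_ultrafilter :: "'b set \<Rightarrow> ('b \<Rightarrow> 'b \<Rightarrow> bool) \<Rightarrow> 'b \<Rightarrow> 'b set \<Rightarrow> bool" where
  "is_ultrafilter P le z0 F \<longleftrightarrow> is_filter P le z0 F \<and>
     (\<forall>G. is_filter P le z0 G \<and> F \<subseteq> G \<longrightarrow> G = F)"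

definition is_cover :: "('e \<Rightarrow> 'v) \<Rightarrow> ('e \<Rightarrow> 'v) \<Rightarrow> ('e \<Rightarrow> 'a) \<Rightarrow> 'v set set \<Rightarrow> ('a, 'v) selem \<Rightarrow> ('a, 'v) selem set \<Rightarrow> bool" where
  "is_cover rg sc lab B x Z \<longleftrightarrow> Z \<subseteq> {y \<in> ES rg sc lab B. sle rg sc lab y x} \<and>
     (\<forall>y\<in>ES rg sc lab B. y \<noteq> None \<and> sle rg sc lab y x \<longrightarrow> (\<exists>z\<in>Z. smult rg sc lab z y \<noteq> None))"

definition is_tight_filter :: "('e \<Rightarrow> 'v) \<Rightarrow> ('e \<Rightarrow> 'v) \<Rightarrow> ('e \<Rightarrow> 'a) \<Rightarrow> 'v set set \<Rightarrow> ('a, 'v) selem set \<Rightarrow> bool" where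
  "is_tight_filter rg sc lab B \<xi> \<longleftrightarrow> is_filter (ES rg sc lab B) (sle rg sc lab) None \<xi> \<and>
     (\<forall>x\<in>\<xi>. \<forall>Z. finite Z \<and> is_cover rg sc lab B x Z \<longrightarrow> Z \<inter> \<xi> \<noteq> {})"

datatype 'a word = FinW "'a list" | InfW "nat \<Rightarrow> 'a"

fun wlen :: "'a word \<Rightarrow> enat" where
  "wlen (FinW \<beta>) = enat (length \<beta>)"
| "wlen (InfW \<alpha>) = \<infinity>"

fun wpref :: "'a word \<Rightarrow> nat \<Rightarrow> 'a list" where
  "wpref (FinW \<beta>) n = take n \<beta>"
| "wpref (InfW \<alpha>) n = map \<alpha> [0..<n]"

definition has_longest_word :: "('a, 'v) selem set \<Rightarrow> 'a list \<Rightarrow> bool" where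
  "has_longest_word \<xi> \<beta> \<longleftrightarrow> (\<exists>A. Some (\<beta>, A, \<beta>) \<in> \<xi>) \<and>
     (\<forall>\<gamma> A \<delta>. Some (\<gamma>, A, \<delta>) \<in> \<xi> \<longrightarrow> length \<gamma> \<le> length \<beta>)"

definition word_of :: "('e \<Rightarrow> 'v) \<Rightarrow> ('e \<Rightarrow> 'v) \<Rightarrow> ('e \<Rightarrow> 'a) \<Rightarrow> ('a, 'v) selem set \<Rightarrow> 'a word \<Rightarrow> bool" where
  "word_of rg sc lab \<xi> w \<longleftrightarrow>
     (case w of
        FinW \<beta> \<Rightarrow> has_longest_word \<xi> \<beta>
      | InfW \<alpha> \<Rightarrow> (\<nexists>\<beta>. has_longest_word \<xi> \<beta>) \<and> \<alpha> \<in> Linf rg sc lab \<and>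
           (\<forall>x\<in>\<xi>. \<exists>n A. x = Some (map \<alpha> [0..<n], A, map \<alpha> [0..<n])))"

definition xi_n :: "'v set set \<Rightarrow> ('a, 'v) selem set \<Rightarrow> 'a word \<Rightarrow> nat \<Rightarrow> 'v set set" where
  "xi_n B \<xi> w n = {A \<in> B. Some (wpref w n, A, wpref w n) \<in> \<xi>}"

end

theory Submission
  imports Defs
begin

lemma ES_Some: "Some (a, E, b) \<in> ES rg sc lab B \<longleftrightarrow>
   a = b \<and> a \<in> Lstar rg sc lab \<and> E \<noteq> {} \<and> E \<in> Bsub rg sc lab B a"
  by (auto simp: ES_def)

lemma ES_None: "None \<in> ES rg sc lab B" by (simp add: ES_def)

lemma ES_cases: "x \<in> ES rg sc lab B \<Longrightarrow> x = None \<or> (\<exists>a E. x = Some (a, E, a))"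
  by (auto simp: ES_def)

lemma rr_nil[simp]: "rel_range rg sc lab A [] = A" by (simp add: rel_range_def)

lemma rr_empty[simp]: "rel_range rg sc lab {} q = {}" by (simp add: rel_range_def)

lemma rr_Un: "rel_range rg sc lab (A \<union> C) q = rel_range rg sc lab A q \<union> rel_range rg sc lab C q"
  by (auto simp: rel_range_def)

lemma rr_nonnil: "q \<noteq> [] \<Longrightarrow> rel_range rg sc lab A q =
   {rg (last es) | es. is_path rg sc es \<and> map lab es = q \<and> sc (hd es) \<in> A}"
  by (simp add: rel_range_def)

lemma rr_mono: "A \<subseteq> C \<Longrightarrow> rel_range rg sc lab A q \<subseteq> rel_range rg sc lab C q"
  by (auto simp: rel_range_def)

lemma rr_Lplus: "rel_range rg sc lab A q \<noteq> {} \<Longrightarrow> q \<noteq> [] \<Longrightarrow> q \<in> Lplus rg sc lab"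
  by (auto simp: rel_range_def Lplus_def split: if_splits)

lemma sle_None: "sle rg sc lab None x" by (simp add: sle_def)

lemma sle_iff: "sle rg sc lab (Some (a, E, a)) (Some (b, D, b)) \<longleftrightarrow>
   (\<exists>q. a = b @ q \<and> E \<noteq> {} \<and> E \<subseteq> rel_range rg sc lab D q)"
proof
  assume h: "sle rg sc lab (Some (a, E, a)) (Some (b, D, b))"
  show "\<exists>q. a = b @ q \<and> E \<noteq> {} \<and> E \<subseteq> rel_range rg sc lab D q"
  proof (cases "\<exists>g. b = a @ g")
    case True
    then obtain g where g: "b = a @ g" by blast
    from h True have "mk_triple (a @ g) (rel_range rg sc lab E g \<inter> D) b = Some (a, E, a)"
      by (simp add: sle_def Let_def g)
    then have "g = []" "E \<subseteq> D" "E \<noteq> {}" by (auto simp: mk_triple_def split: if_splits)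
    then show ?thesis using g by (intro exI[of _ "[]"]) auto
  next
    case False
    show ?thesis
    proof (cases "\<exists>q. a = b @ q")
      case True
      then obtain q where q: "a = b @ q" by blast
      from h False True have "mk_triple a (E \<inter> rel_range rg sc lab D q) (b @ q) = Some (a, E, a)"
        by (simp add: sle_def Let_def q)
      then show ?thesis using q by (auto simp: mk_triple_def split: if_splits)
    next
      case False2: False
      from h False False2 show ?thesis by (simp add: sle_def)
    qed
  qed
next
  assume "\<exists>q. a = b @ q \<and> E \<noteq> {} \<and> E \<subseteq> rel_range rg sc lab D q"
  then obtain q where q: "a = b @ q" "E \<noteq> {}" "E \<subseteq> rel_range rg sc lab D q" by blast
  show "sle rg sc lab (Some (a, E, a)) (Some (b, D, b))"
  proof (cases "q = []")
    case True
    then show ?thesis using q by (auto simp: sle_def mk_triple_def Int_absorb2)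
  next
    case False
    then have "\<not> (\<exists>g. b = a @ g)" using q by auto
    then show ?thesis using q False by (auto simp: sle_def mk_triple_def Let_def Int_absorb1)
  qed
qed

lemma smult_ne: "d \<in> rel_range rg sc lab A q \<Longrightarrow> d \<in> D \<Longrightarrow>
   smult rg sc lab (Some (p, A, p)) (Some (p @ q, D, p @ q)) \<noteq> None"
  by (auto simp: mk_triple_def Let_def)

lemma path_split:
  assumes "is_path rg sc es" "map lab es = p @ q" "p \<noteq> []" "q \<noteq> []"
  shows "is_path rg sc (take (length p) es) \<and> map lab (take (length p) es) = p \<and>
         is_path rg sc (drop (length p) es) \<and> map lab (drop (length p) es) = q \<and>
         rg (last (take (length p) es)) = sc (hd (drop (length p) es)) \<and>
         last (drop (length p) es) = last es \<and> hd (take (length p) es) = hd es"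
proof -
  let ?k = "length p"
  have len: "length es = ?k + length q" using assms(2) by (metis length_append length_map)
  have kpos: "?k > 0" using assms(3) by simp
  have qpos: "length q > 0" using assms(4) by simp
  have P: "\<And>i. Suc i < length es \<Longrightarrow> rg (es ! i) = sc (es ! Suc i)"
    using assms(1) by (simp add: is_path_def)
  have m1: "map lab (take ?k es) = p" using assms(2) by (metis append_eq_conv_conj take_map)
  have m2: "map lab (drop ?k es) = q" using assms(2) by (metis append_eq_conv_conj drop_map)
  have p1: "is_path rg sc (take ?k es)"
    unfolding is_path_def using len kpos qpos P by auto
  have p2: "is_path rg sc (drop ?k es)"
    unfolding is_path_def using len kpos qpos P by auto
  have l1: "last (take ?k es) = es ! (?k - 1)"
  proof -
    have "take ?k es \<noteq> []" using len kpos by (cases es) auto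
    then have "last (take ?k es) = take ?k es ! (length (take ?k es) - 1)" by (simp add: last_conv_nth)
    also have "\<dots> = es ! (?k - 1)" using len kpos by simp
    finally show ?thesis .
  qed
  have h2: "hd (drop ?k es) = es ! ?k"
    using len qpos by (simp add: hd_drop_conv_nth)
  have c: "rg (es ! (?k - 1)) = sc (es ! ?k)"
    using P[of "?k - 1"] len kpos qpos by simp
  have l2: "last (drop ?k es) = last es" using len qpos by (simp add: last_drop)
  have h1: "hd (take ?k es) = hd es" using kpos len by (simp add: hd_take)
  show ?thesis using m1 m2 p1 p2 l1 h2 c l2 h1 by simp
qed

lemma rr_append:
  assumes "p \<noteq> []"
  shows "rel_range rg sc lab X (p @ q) \<subseteq> rel_range rg sc lab (rel_range rg sc lab X p) q"
proof (cases "q = []")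
  case True then show ?thesis by simp
next
  case False
  show ?thesis
  proof
    fix v assume "v \<in> rel_range rg sc lab X (p @ q)"
    then obtain es where es: "is_path rg sc es" "map lab es = p @ q" "sc (hd es) \<in> X" "v = rg (last es)"
      using assms by (auto simp: rel_range_def)
    note S = path_split[OF es(1,2) assms False]
    let ?e1 = "take (length p) es" and ?e2 = "drop (length p) es"
    have u: "rg (last ?e1) \<in> rel_range rg sc lab X p"
      unfolding rel_range_def using assms S es(3) by (simp, metis)
    have "v = rg (last ?e2)" "is_path rg sc ?e2" "map lab ?e2 = q"
       "sc (hd ?e2) \<in> rel_range rg sc lab X p"
      using S es(4) u by auto
    then show "v \<in> rel_range rg sc lab (rel_range rg sc lab X p) q"
      unfolding rr_nonnil[OF False] by blast
  qed
qed

lemma Lplus_prefix: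
  assumes "p @ q \<in> Lplus rg sc lab" "p \<noteq> []"
  shows "p \<in> Lplus rg sc lab"
proof (cases "q = []")
  case True then show ?thesis using assms by simp
next
  case False
  from assms obtain es where "is_path rg sc es" "map lab (es) = p @ q" by (auto simp: Lplus_def)
  from path_split[OF this assms(2) False] have "is_path rg sc (take (length p) es)" "map lab (take (length p) es) = p" by auto
  then show ?thesis unfolding Lplus_def by (intro CollectI exI[of _ "take (length p) es"]) simp
qed

lemma Bsub_B: "A \<in> Bsub rg sc lab B a \<Longrightarrow> A \<in> B" by (auto simp: Bsub_def split: if_splits)

lemma Bsub_sub: "A \<in> Bsub rg sc lab B a \<Longrightarrow> C \<in> B \<Longrightarrow> C \<subseteq> A \<Longrightarrow> C \<in> Bsub rg sc lab B a"
  by (auto simp: Bsub_def split: if_splits)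

lemma ultra_main:
  assumes acc: "accommodating rg sc lab B"
    and wlr: "weakly_left_resolving rg sc lab B"
    and crc: "closed_rel_compl B"
    and tf: "is_tight_filter rg sc lab B \<xi>"
    and ne: "{A \<in> B. Some (p, A, p) \<in> \<xi>} \<noteq> {}"
  shows "is_ultrafilter (Bsub rg sc lab B p) (\<subseteq>) {} {A \<in> B. Some (p, A, p) \<in> \<xi>}"
proof -
  let ?F = "{A \<in> B. Some (p, A, p) \<in> \<xi>}"
  let ?P = "Bsub rg sc lab B p"
  let ?r = "rel_range rg sc lab"
  have fil: "is_filter (ES rg sc lab B) (sle rg sc lab) None \<xi>"
    using tf by (simp add: is_tight_filter_def)
  have xiES: "\<xi> \<subseteq> ES rg sc lab B" and Nxi: "None \<notin> \<xi>"
    and up: "\<And>x y. x \<in> \<xi> \<Longrightarrow> y \<in> ES rg sc lab B \<Longrightarrow> sle rg sc lab x y \<Longrightarrow> y \<in> \<xi>"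
    and dir: "\<And>x y. x \<in> \<xi> \<Longrightarrow> y \<in> \<xi> \<Longrightarrow> \<exists>z\<in>\<xi>. sle rg sc lab z x \<and> sle rg sc lab z y"
    using fil unfolding is_filter_def by blast+
  have tight: "\<And>x Z. x \<in> \<xi> \<Longrightarrow> finite Z \<Longrightarrow> is_cover rg sc lab B x Z \<Longrightarrow> Z \<inter> \<xi> \<noteq> {}"
    using tf by (simp add: is_tight_filter_def)
  have Fmem: "\<And>A. A \<in> ?F \<Longrightarrow> p \<in> Lstar rg sc lab \<and> A \<noteq> {} \<and> A \<in> ?P"
    using xiES by (auto simp: ES_Some)
  obtain A0 where A0: "A0 \<in> ?F" using ne by blast
  have pL: "p \<in> Lstar rg sc lab" using Fmem[OF A0] by blast
  have int: "\<And>A C. A \<in> B \<Longrightarrow> C \<in> B \<Longrightarrow> A \<inter> C \<in> B" using acc by (simp add: accommodating_def)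
  have dif: "\<And>A C. A \<in> B \<Longrightarrow> C \<in> B \<Longrightarrow> A - C \<in> B" using crc by (simp add: closed_rel_compl_def)
  have upF: "\<And>A C. A \<in> ?F \<Longrightarrow> C \<in> ?P \<Longrightarrow> A \<subseteq> C \<Longrightarrow> C \<in> ?F"
  proof -
    fix A C assume a: "A \<in> ?F" "C \<in> ?P" "A \<subseteq> C"
    have "Some (p, C, p) \<in> ES rg sc lab B" using Fmem[OF a(1)] a by (auto simp: ES_Some)
    moreover have "sle rg sc lab (Some (p, A, p)) (Some (p, C, p))"
      using Fmem[OF a(1)] a by (auto simp: sle_iff intro!: exI[of _ "[]"])
    ultimately show "C \<in> ?F" using a up Bsub_B by blast
  qed
  have isF: "is_filter ?P (\<subseteq>) {} ?F"
    unfolding is_filter_def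
  proof (intro conjI ballI impI)
    show "?F \<subseteq> ?P" using Fmem by blast
    show "?F \<noteq> {}" by fact
    show "{} \<notin> ?F" using Fmem by blast
    show "\<And>x y. x \<in> ?F \<Longrightarrow> y \<in> ?P \<Longrightarrow> x \<subseteq> y \<Longrightarrow> y \<in> ?F" using upF by blast
    fix A A' assume a: "A \<in> ?F" "A' \<in> ?F"
    obtain z where z: "z \<in> \<xi>" "sle rg sc lab z (Some (p, A, p))" "sle rg sc lab z (Some (p, A', p))"
      using dir a by blast
    obtain a' D where zD: "z = Some (a', D, a')" using ES_cases z(1) xiES Nxi by blast
    obtain q where q: "a' = p @ q" "D \<noteq> {}" "D \<subseteq> ?r A q" using z(2) unfolding zD sle_iff by blast
    have q2: "D \<subseteq> ?r A' q" using z(3) q(1) unfolding zD sle_iff by auto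
    have AB: "A \<in> B" "A' \<in> B" using a by auto
    have D2: "D \<subseteq> ?r (A \<inter> A') q"
    proof (cases "q = []")
      case True then show ?thesis using q q2 by simp
    next
      case False
      have "?r A q \<noteq> {}" using q(2,3) by blast
      then have "q \<in> Lplus rg sc lab" using rr_Lplus False by metis
      then have "?r (A \<inter> A') q = ?r A q \<inter> ?r A' q" using wlr AB
        by (simp add: weakly_left_resolving_def)
      then show ?thesis using q q2 by simp
    qed
    have ne2: "A \<inter> A' \<noteq> {}" using D2 q(2) by auto
    have AP: "A \<in> ?P" using Fmem[OF a(1)] by blast
    have inP: "A \<inter> A' \<in> ?P" using Bsub_sub[OF AP int[OF AB] Int_lower1] .
    have "Some (p, A \<inter> A', p) \<in> ES rg sc lab B" using ne2 inP pL by (simp add: ES_Some)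
    moreover have "sle rg sc lab z (Some (p, A \<inter> A', p))" using zD q D2 by (simp add: sle_iff)
    ultimately have "Some (p, A \<inter> A', p) \<in> \<xi>" by (rule up[OF z(1)])
    then have "A \<inter> A' \<in> ?F" using int[OF AB] by blast
    then show "\<exists>z\<in>?F. z \<subseteq> A \<and> z \<subseteq> A'" by blast
  qed
  have maxF: "\<And>G. is_filter ?P (\<subseteq>) {} G \<Longrightarrow> ?F \<subseteq> G \<Longrightarrow> G = ?F"
  proof -
    fix G assume G: "is_filter ?P (\<subseteq>) {} G" "?F \<subseteq> G"
    have GP: "G \<subseteq> ?P" using G(1) by (simp add: is_filter_def)
    have Ge: "{} \<notin> G" using G(1) by (simp add: is_filter_def)
    have Gd: "\<And>x y. x \<in> G \<Longrightarrow> y \<in> G \<Longrightarrow> \<exists>z\<in>G. z \<subseteq> x \<and> z \<subseteq> y"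
      using G(1) by (simp add: is_filter_def)
    have "G \<subseteq> ?F"
    proof
      fix C assume C: "C \<in> G"
      have CP: "C \<in> ?P" using C GP by blast
      have CB: "C \<in> B" using CP Bsub_B by blast
      let ?A = A0
      have AB: "?A \<in> B" using A0 by blast
      have AP: "?A \<in> ?P" using Fmem[OF A0] by blast
      let ?x = "Some (p, ?A, p)"
      have x: "?x \<in> \<xi>" using A0 by blast
      define Z where "Z = {mk_triple p (?A \<inter> C) p, mk_triple p (?A - C) p}"
      have Zsub: "\<And>X. X \<subseteq> ?A \<Longrightarrow> X \<in> B \<Longrightarrow> mk_triple p X p \<in> ES rg sc lab B \<and> sle rg sc lab (mk_triple p X p) ?x"
      proof -
        fix X assume X: "X \<subseteq> ?A" "X \<in> B"
        show "mk_triple p X p \<in> ES rg sc lab B \<and> sle rg sc lab (mk_triple p X p) ?x"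
        proof (cases "X = {}")
          case True then show ?thesis by (simp add: mk_triple_def ES_None sle_None)
        next
          case False
          have XP: "X \<in> ?P" using Bsub_sub[OF AP X(2) X(1)] .
          have mk: "mk_triple p X p = Some (p, X, p)" using False by (simp add: mk_triple_def)
          have e: "Some (p, X, p) \<in> ES rg sc lab B" using False pL XP by (simp add: ES_Some)
          have "\<exists>q. p = p @ q \<and> X \<noteq> {} \<and> X \<subseteq> rel_range rg sc lab ?A q"
            using False X(1) by (intro exI[of _ "[]"]) simp
          then have "sle rg sc lab (Some (p, X, p)) ?x" unfolding sle_iff .
          then show ?thesis using mk e by simp
        qed
      qed
      have cov: "is_cover rg sc lab B ?x Z"
        unfolding is_cover_def
      proof (intro conjI ballI impI)
        have z1: "mk_triple p (?A \<inter> C) p \<in> {y \<in> ES rg sc lab B. sle rg sc lab y ?x}"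
          using Zsub[of "?A \<inter> C"] int[OF AB CB] by blast
        have z2: "mk_triple p (?A - C) p \<in> {y \<in> ES rg sc lab B. sle rg sc lab y ?x}"
          using Zsub[of "?A - C"] dif[OF AB CB] by blast
        show "Z \<subseteq> {y \<in> ES rg sc lab B. sle rg sc lab y ?x}"
          unfolding Z_def using z1 z2 by (simp only: insert_subset empty_subsetI simp_thms)
        fix y assume y: "y \<in> ES rg sc lab B" "y \<noteq> None \<and> sle rg sc lab y ?x"
        obtain a' D where yD: "y = Some (a', D, a')" using ES_cases[OF y(1)] y(2) by blast
        obtain q where q: "a' = p @ q" "D \<noteq> {}" "D \<subseteq> rel_range rg sc lab ?A q"
          using y unfolding yD sle_iff by blast
        obtain d where d: "d \<in> D" using q(2) by blast
        have "rel_range rg sc lab ?A q = rel_range rg sc lab (?A \<inter> C) q \<union> rel_range rg sc lab (?A - C) q"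
          using rr_Un[of rg sc lab "?A \<inter> C" "?A - C" q] by (simp add: Int_Diff_Un)
        then have "d \<in> rel_range rg sc lab (?A \<inter> C) q \<or> d \<in> rel_range rg sc lab (?A - C) q"
          using d q by blast
        then show "\<exists>z\<in>Z. smult rg sc lab z y \<noteq> None"
        proof
          assume h: "d \<in> rel_range rg sc lab (?A \<inter> C) q"
          then have "?A \<inter> C \<noteq> {}" by auto
          then show ?thesis using smult_ne[OF h d, of p] unfolding Z_def yD q(1)
            by (auto simp: mk_triple_def)
        next
          assume h: "d \<in> rel_range rg sc lab (?A - C) q"
          then have "?A - C \<noteq> {}" by (metis rr_empty empty_iff)
          then show ?thesis using smult_ne[OF h d, of p] unfolding Z_def yD q(1)
            by (auto simp: mk_triple_def)
        qed
      qed
      have "Z \<inter> \<xi> \<noteq> {}" using tight[OF x _ cov] Z_def by simp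
      then obtain z where z: "z \<in> Z" "z \<in> \<xi>" by blast
      then have "(?A \<inter> C \<noteq> {} \<and> Some (p, ?A \<inter> C, p) \<in> \<xi>) \<or> (?A - C \<noteq> {} \<and> Some (p, ?A - C, p) \<in> \<xi>)"
        using Nxi unfolding Z_def by (auto simp: mk_triple_def split: if_splits)
      then show "C \<in> ?F"
      proof
        assume "?A \<inter> C \<noteq> {} \<and> Some (p, ?A \<inter> C, p) \<in> \<xi>"
        then have "?A \<inter> C \<in> ?F" using int[OF AB CB] by blast
        then show ?thesis using upF CP by blast
      next
        assume "?A - C \<noteq> {} \<and> Some (p, ?A - C, p) \<in> \<xi>"
        then have "?A - C \<in> G" using dif[OF AB CB] G(2) by blast
        then obtain E where "E \<in> G" "E \<subseteq> ?A - C" "E \<subseteq> C" using Gd C by blast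
        then have "E = {}" by blast
        then show ?thesis using Ge \<open>E \<in> G\<close> by blast
      qed
    qed
    then show "G = ?F" using G(2) by blast
  qed
  show ?thesis unfolding is_ultrafilter_def using isF maxF by blast
qed

lemma nonempty_pref:
  assumes acc: "accommodating rg sc lab B"
    and tf: "is_tight_filter rg sc lab B \<xi>"
    and x: "Some (p @ q, A, p @ q) \<in> \<xi>" and pne: "p \<noteq> []"
  shows "rel_range rg sc lab UNIV p \<in> {A \<in> B. Some (p, A, p) \<in> \<xi>}"
proof -
  let ?r = "rel_range rg sc lab"
  have fil: "is_filter (ES rg sc lab B) (sle rg sc lab) None \<xi>"
    using tf by (simp add: is_tight_filter_def)
  have xiES: "\<xi> \<subseteq> ES rg sc lab B"
    and up: "\<And>x y. x \<in> \<xi> \<Longrightarrow> y \<in> ES rg sc lab B \<Longrightarrow> sle rg sc lab x y \<Longrightarrow> y \<in> \<xi>"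
    using fil unfolding is_filter_def by blast+
  have m: "p @ q \<in> Lstar rg sc lab" "A \<noteq> {}" "A \<in> Bsub rg sc lab B (p @ q)"
    using x xiES by (auto simp: ES_Some)
  have pq: "p @ q \<in> Lplus rg sc lab" using m(1) pne by (auto simp: Lstar_def)
  have pL: "p \<in> Lplus rg sc lab" using Lplus_prefix[OF pq pne] .
  have "A \<subseteq> ?r UNIV (p @ q)" using m(3) pne by (simp add: Bsub_def)
  also have "\<dots> \<subseteq> ?r (?r UNIV p) q" using rr_append[OF pne] .
  finally have Asub: "A \<subseteq> ?r (?r UNIV p) q" .
  have rB: "?r UNIV p \<in> B" using acc pL by (simp add: accommodating_def)
  have rne: "?r UNIV p \<noteq> {}" using Asub m(2) by auto
  have "Some (p, ?r UNIV p, p) \<in> ES rg sc lab B"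
    using pL rB rne pne by (auto simp: ES_Some Lstar_def Bsub_def)
  moreover have "sle rg sc lab (Some (p @ q, A, p @ q)) (Some (p, ?r UNIV p, p))"
    using Asub m(2) by (simp add: sle_iff)
  ultimately show ?thesis using up x rB by blast
qed

theorem mainTheorem15:
  fixes rg sc :: "'e \<Rightarrow> 'v" and lab :: "'e \<Rightarrow> 'a" and B :: "'v set set"
    and \<xi> :: "('a, 'v) selem set" and w :: "'a word"
  assumes "countable (UNIV :: 'v set)" and "countable (UNIV :: 'e set)"
    and "accommodating rg sc lab B"
    and "weakly_left_resolving rg sc lab B"
    and "closed_rel_compl B"
    and "is_tight_filter rg sc lab B \<xi>"
    and "word_of rg sc lab \<xi> w"
  shows "(\<forall>n::nat. 0 < n \<and> enat n \<le> wlen w \<longrightarrow>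
            is_ultrafilter (Bsub rg sc lab B (wpref w n)) (\<subseteq>) {} (xi_n B \<xi> w n))
       \<and> (xi_n B \<xi> w 0 = {} \<or> is_ultrafilter B (\<subseteq>) {} (xi_n B \<xi> w 0))"
proof (intro conjI allI impI)
  note UM = ultra_main[OF assms(3,4,5,6)]
  have w0: "wpref w 0 = []" by (cases w) auto
  show "xi_n B \<xi> w 0 = {} \<or> is_ultrafilter B (\<subseteq>) {} (xi_n B \<xi> w 0)"
    using UM[of "[]"] w0 by (auto simp: xi_n_def Bsub_def)
  fix n :: nat assume n: "0 < n \<and> enat n \<le> wlen w"
  have "xi_n B \<xi> w n \<noteq> {}"
  proof (cases w)
    case (FinW \<beta>)
    then have hl: "has_longest_word \<xi> \<beta>" using assms(7) by (simp add: word_of_def)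
    then obtain A where A: "Some (\<beta>, A, \<beta>) \<in> \<xi>" by (auto simp: has_longest_word_def)
    have nl: "n \<le> length \<beta>" using n FinW by simp
    have "Some (take n \<beta> @ drop n \<beta>, A, take n \<beta> @ drop n \<beta>) \<in> \<xi>" using A by simp
    moreover have "take n \<beta> \<noteq> []" using n nl by (cases \<beta>) auto
    ultimately have "rel_range rg sc lab UNIV (take n \<beta>) \<in> {A \<in> B. Some (take n \<beta>, A, take n \<beta>) \<in> \<xi>}"
      by (rule nonempty_pref[OF assms(3,6)])
    then show ?thesis using FinW by (auto simp: xi_n_def)
  next
    case (InfW \<alpha>)
    then have W: "(\<nexists>\<beta>. has_longest_word \<xi> \<beta>)"
      "\<forall>x\<in>\<xi>. \<exists>n A. x = Some (map \<alpha> [0..<n], A, map \<alpha> [0..<n])"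
      using assms(7) by (auto simp: word_of_def)
    have xine: "\<xi> \<noteq> {}" using assms(6) by (simp add: is_tight_filter_def is_filter_def)
    have "\<exists>m A. n \<le> m \<and> Some (map \<alpha> [0..<m], A, map \<alpha> [0..<m]) \<in> \<xi>"
    proof (rule ccontr)
      assume nm: "\<not> ?thesis"
      let ?M = "{m. \<exists>A. Some (map \<alpha> [0..<m], A, map \<alpha> [0..<m]) \<in> \<xi>}"
      have Mb: "?M \<subseteq> {..<n}"
      proof
        fix m assume "m \<in> ?M"
        then obtain A where "Some (map \<alpha> [0..<m], A, map \<alpha> [0..<m]) \<in> \<xi>" by blast
        then have "\<not> n \<le> m" using nm by blast
        then show "m \<in> {..<n}" by simp
      qed
      have Mf: "finite ?M" using Mb finite_subset by blast
      have Mne: "?M \<noteq> {}" using xine W(2) by fastforce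
      let ?m = "Max ?M"
      have mM: "?m \<in> ?M" using Mf Mne by (rule Max_in)
      have "has_longest_word \<xi> (map \<alpha> [0..<?m])"
        unfolding has_longest_word_def
      proof (intro conjI allI impI)
        show "\<exists>A. Some (map \<alpha> [0..<?m], A, map \<alpha> [0..<?m]) \<in> \<xi>" using mM by blast
        fix \<gamma> A \<delta> assume h: "Some (\<gamma>, A, \<delta>) \<in> \<xi>"
        then obtain k A' where k: "Some (\<gamma>, A, \<delta>) = Some (map \<alpha> [0..<k], A', map \<alpha> [0..<k])"
          using W(2) by blast
        then have "k \<in> ?M" using h by auto
        then have "k \<le> ?m" using Mf by simp
        then show "length \<gamma> \<le> length (map \<alpha> [0..<?m])" using k by simp
      qed
      then show False using W(1) by blast
    qed
    then obtain m A where mA: "n \<le> m" "Some (map \<alpha> [0..<m], A, map \<alpha> [0..<m]) \<in> \<xi>" by blast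
    have sp: "map \<alpha> [0..<m] = map \<alpha> [0..<n] @ map \<alpha> [n..<m]"
      using mA(1) by (metis map_append le_add_diff_inverse upt_add_eq_append zero_le)
    have "map \<alpha> [0..<n] \<noteq> []" using n by simp
    from nonempty_pref[OF assms(3,6) mA(2)[unfolded sp] this] InfW show ?thesis
      by (auto simp: xi_n_def)
  qed
  then show "is_ultrafilter (Bsub rg sc lab B (wpref w n)) (\<subseteq>) {} (xi_n B \<xi> w n)"
    using UM[of "wpref w n"] by (simp add: xi_n_def)
qed

end
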